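(* Suppose a black-white array (BWA) stores $n$ values (state variable $\mathtt{total}=n$), where $n$ is $k$-trailed, and a new value is inserted. Then: (a) the result of the $k$ recursive merges is held in the white segment of rank $k$, and it contains all the values that were in segments of rank smaller than $k$, together with the new value; (b) once the insertion is completed, all segments of rank smaller than $k$ are inactive; (c) if $n$ is strongly $k$-trailed, then after the insertion all values in the BWA are held in the segment of rank $k$.
   Context: A black-white array (BWA) of size $N=2^K$ stores values from a totally ordered set. It has a white array $W[1..N-1]$ and a black array $B[1..N/2-1]$. For $i\ge 0$, the segment of rank $i$ of either array is the block of indices $[2^i,2^{i+1}-1]$. An integer state variable $\mathtt{total}$ records the number of stored values and is initially $0$. The segment of rank $i$ is active iff bit $i$ of $\mathtt{total}$ equals $1$ (bits counted from the least significant bit, which is bit $0$). Between operations, all stored values are held in the active white segments, each sorted ascending. Insert$(v)$: if the rank-0 segment is inactive, set $W[1]=v$; otherwise set $B[1]=v$ and perform $\mathrm{merge}(0)$. $\mathrm{merge}(i)$: merge the sorted white and black segments of rank $i$ by a standard two-way merge. If the rank-$(i+1)$ segment is inactive, the sorted result is written into the white segment of rank $i+1$. Otherwise it is written into the black segment of rank $i+1$, and then $\mathrm{merge}(i+1)$ is performed. When an insertion completes, $\mathtt{total}$ has increased by one. A nonnegative integer $n$ is $k$-trailed if its binary form is $[b_{m-1},\dots,b_{k+1},0,1,\dots,1]$, with exactly $k$ trailing ones followed by a $0$ at bit $k$. It is strongly $k$-trailed if moreover $b_i=0$ for all $i>k$, i.e. $n=2^k-1$. *)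

theory Defs
  imports "HOL-Library.Multiset"
begin

text \<open>Black-white array (BWA). Arrays are modelled as functions from indices to values;
  only indices in the segments matter. The segment of rank i is the block [2^i, 2^(i+1)-1].\<close>

record 'a bwa =
  W :: "nat \<Rightarrow> 'a"
  B :: "nat \<Rightarrow> 'a"
  total :: nat

definition seg :: "(nat \<Rightarrow> 'a) \<Rightarrow> nat \<Rightarrow> 'a list" where
  "seg A i = map A [2^i ..< 2^(i+1)]"

definition write_seg :: "(nat \<Rightarrow> 'a) \<Rightarrow> nat \<Rightarrow> 'a list \<Rightarrow> (nat \<Rightarrow> 'a)" where
  "write_seg A i xs = (\<lambda>j. if 2^i \<le> j \<and> j < 2^i + length xs then xs ! (j - 2^i) else A j)"

fun lmerge :: "'a::linorder list \<Rightarrow> 'a list \<Rightarrow> 'a list" where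
  "lmerge [] ys = ys"
| "lmerge xs [] = xs"
| "lmerge (x # xs) (y # ys) =
     (if x \<le> y then x # lmerge xs (y # ys) else y # lmerge (x # xs) ys)"

definition active :: "'a bwa \<Rightarrow> nat \<Rightarrow> bool" where
  "active S i \<longleftrightarrow> bit (total S) i"

lemma bit_nat_rank_less: "bit (t::nat) j \<Longrightarrow> j < t"
proof -
  assume "bit t j"
  then have "odd (t div 2^j)" by (simp add: bit_iff_odd)
  then have "t div 2^j \<noteq> 0" by (metis even_zero)
  then have "2^j \<le> t" by (simp add: div_eq_0_iff not_less)
  moreover have "j < (2::nat)^j" by (rule less_exp)
  ultimately show ?thesis by linarith
qed

text \<open>merge(i), performed during an insertion into a BWA whose counter total equals t
  (total is only incremented once the insertion is completed). Returns the new (W, B).\<close>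
function merge_rec :: "nat \<Rightarrow> nat \<Rightarrow> (nat \<Rightarrow> 'a::linorder) \<Rightarrow> (nat \<Rightarrow> 'a)
                         \<Rightarrow> (nat \<Rightarrow> 'a) \<times> (nat \<Rightarrow> 'a)" where
  "merge_rec t i Wa Ba =
     (let xs = lmerge (seg Wa i) (seg Ba i) in
      if bit t (i+1) then merge_rec t (i+1) Wa (write_seg Ba (i+1) xs)
      else (write_seg Wa (i+1) xs, Ba))"
  by pat_completeness auto
termination
  by (relation "measure (\<lambda>(t, i, _, _). t - i)") (auto dest: bit_nat_rank_less)

definition insert_bwa :: "'a::linorder \<Rightarrow> 'a bwa \<Rightarrow> 'a bwa" where
  "insert_bwa v S =
     (if \<not> bit (total S) 0 then S\<lparr>W := (W S)(1 := v), total := total S + 1\<rparr>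
      else (case merge_rec (total S) 0 (W S) ((B S)(1 := v)) of
              (W', B') \<Rightarrow> S\<lparr>W := W', B := B', total := total S + 1\<rparr>))"

text \<open>Multiset of stored values: contents of the active white segments
  (an active rank i satisfies i < total, see bit_nat_rank_less).\<close>
definition stored :: "'a bwa \<Rightarrow> 'a multiset" where
  "stored S = (\<Sum>i \<in> {i. i < total S \<and> active S i}. mset (seg (W S) i))"

text \<open>Invariant between operations for a BWA of size N = 2^K: white array W[1..N-1] can hold
  total values, and every active white segment is sorted ascending.\<close>
definition bwa_inv :: "nat \<Rightarrow> 'a::linorder bwa \<Rightarrow> bool" where
  "bwa_inv K S \<longleftrightarrow> total S \<le> 2^K - 1 \<and> (\<forall>i. active S i \<longrightarrow> sorted (seg (W S) i))"

definition k_trailed :: "nat \<Rightarrow> nat \<Rightarrow> bool" where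
  "k_trailed k n \<longleftrightarrow> (\<forall>i<k. bit n i) \<and> \<not> bit n k"

definition strongly_k_trailed :: "nat \<Rightarrow> nat \<Rightarrow> bool" where
  "strongly_k_trailed k n \<longleftrightarrow> k_trailed k n \<and> (\<forall>i>k. \<not> bit n i)"

end

theory Submission
  imports Defs
begin

lemma mset_lmerge: "mset (lmerge xs ys) = mset xs + mset ys"
  by (induction xs ys rule: lmerge.induct) auto

lemma length_lmerge: "length (lmerge xs ys) = length xs + length ys"
  by (induction xs ys rule: lmerge.induct) auto

lemma length_seg: "length (seg A i) = 2^i"
  by (simp add: seg_def)

lemma seg_write_same: "length xs = 2^i \<Longrightarrow> seg (write_seg A i xs) i = xs"
  by (auto simp: seg_def write_seg_def intro!: nth_equalityI)

lemma seg_write_other: "j < k \<Longrightarrow> seg (write_seg A k xs) j = seg A j"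
proof -
  assume "j < k"
  then have "(2::nat)^(j+1) \<le> 2^k" by (intro power_increasing) auto
  then show ?thesis by (auto simp: seg_def write_seg_def)
qed

lemma merge_main:
  "i < k \<Longrightarrow> (\<forall>j. i < j \<and> j < k \<longrightarrow> bit t j) \<Longrightarrow> \<not> bit t k \<Longrightarrow>
   \<exists>xs. fst (merge_rec t i Wa Ba) = write_seg Wa k xs \<and>
        mset xs = (\<Sum>j\<in>{i..<k}. mset (seg Wa j)) + mset (seg Ba i) \<and> length xs = 2^k"
proof (induction "k - i - 1" arbitrary: i Ba)
  case 0
  then have k: "k = i + 1" by simp
  show ?case
    using 0 k
    by (subst merge_rec.simps)
       (auto simp: Let_def mset_lmerge length_lmerge length_seg)
next
  case (Suc d)
  let ?xs0 = "lmerge (seg Wa i) (seg Ba i)"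
  have b: "bit t (i+1)" using Suc by auto
  have l0: "length ?xs0 = 2^(i+1)" by (simp add: length_lmerge length_seg)
  have e: "merge_rec t i Wa Ba = merge_rec t (i+1) Wa (write_seg Ba (i+1) ?xs0)"
    using b by (subst merge_rec.simps) (simp add: Let_def)
  obtain xs where xs: "fst (merge_rec t (i+1) Wa (write_seg Ba (i+1) ?xs0)) = write_seg Wa k xs"
    "mset xs = (\<Sum>j\<in>{i+1..<k}. mset (seg Wa j)) + mset (seg (write_seg Ba (i+1) ?xs0) (i+1))"
    "length xs = 2^k"
  proof -
    have dd: "d = k - (i+1) - 1" using Suc.hyps(2) by simp
    have p1: "i+1 < k" using Suc.hyps(2) Suc.prems(1) by simp
    have p2: "\<forall>j. i+1 < j \<and> j < k \<longrightarrow> bit t j" using Suc.prems(2) by simp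
    show ?thesis using Suc.hyps(1)[OF dd p1 p2 Suc.prems(3), where Ba="write_seg Ba (i+1) ?xs0"] that
      by blast
  qed
  have "{i..<k} = insert i {i+1..<k}" using Suc.prems by auto
  then have "(\<Sum>j\<in>{i..<k}. mset (seg Wa j)) = mset (seg Wa i) + (\<Sum>j\<in>{i+1..<k}. mset (seg Wa j))"
    by simp
  then show ?case using xs e seg_write_same[OF l0] by (auto simp: mset_lmerge)
qed

lemma trail_succ:
  "k_trailed k n \<Longrightarrow> (\<forall>i<k. \<not> bit (n+1) i) \<and> bit (n+1) k \<and> (\<forall>i>k. bit (n+1) i = bit n i)"
proof (induction k arbitrary: n)
  case 0
  then have ev: "even n" by (simp add: k_trailed_def bit_0)
  have "\<forall>i>0. bit (n+1) i = bit n i"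
  proof (intro allI impI)
    fix i :: nat assume "0 < i"
    then obtain j where j: "i = Suc j" by (cases i) auto
    have "(n+1) div 2 = n div 2" using ev by auto
    then show "bit (n+1) i = bit n i" by (simp add: j bit_Suc)
  qed
  then show ?case using ev by (simp add: bit_0)
next
  case (Suc k)
  have od: "odd n" using Suc.prems by (auto simp: k_trailed_def bit_0)
  have kt: "k_trailed k (n div 2)" using Suc.prems
    by (auto simp: k_trailed_def bit_Suc[symmetric])
  have d: "(n+1) div 2 = n div 2 + 1" "Suc n div 2 = Suc (n div 2)" using od by presburger+
  note IH = Suc.IH[OF kt]
  have A: "\<forall>i<Suc k. \<not> bit (n+1) i"
  proof (intro allI impI)
    fix i assume "i < Suc k"
    then show "\<not> bit (n+1) i" using IH od by (cases i) (auto simp: bit_0 bit_Suc d)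
  qed
  have C: "\<forall>i>Suc k. bit (n+1) i = bit n i"
  proof (intro allI impI)
    fix i assume "Suc k < i"
    then obtain j where "i = Suc j" "k < j" by (cases i) auto
    then show "bit (n+1) i = bit n i" using IH by (simp add: bit_Suc d)
  qed
  show ?case using A C IH by (simp add: bit_Suc d)
qed

theorem mainTheorem2:
  fixes S :: "'a::linorder bwa" and v :: 'a and K k n :: nat
  assumes inv: "bwa_inv K S"
    and room: "total S + 1 \<le> 2^K - 1"
    and tot: "total S = n"
    and trailed: "k_trailed k n"
  defines "S' \<equiv> insert_bwa v S"
  shows "mset (seg (W S') k) = (\<Sum>i<k. mset (seg (W S) i)) + {#v#}
         \<and> (\<forall>i<k. \<not> active S' i)
         \<and> (strongly_k_trailed k n \<longrightarrow> stored S' = mset (seg (W S') k))"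
proof -
  have ts: "total S' = n + 1" unfolding S'_def insert_bwa_def using tot
    by (auto split: prod.splits)
  note TS = trail_succ[OF trailed]
  have P1: "mset (seg (W S') k) = (\<Sum>i<k. mset (seg (W S) i)) + {#v#}"
  proof (cases k)
    case 0
    then have "\<not> bit n 0" using trailed by (simp add: k_trailed_def)
    then show ?thesis using 0 tot by (simp add: S'_def insert_bwa_def seg_def numeral_2_eq_2)
  next
    case (Suc k')
    then have b0: "bit n 0" using trailed by (simp add: k_trailed_def)
    obtain xs where xs: "fst (merge_rec n 0 (W S) ((B S)(1 := v))) = write_seg (W S) k xs"
      "mset xs = (\<Sum>j\<in>{0..<k}. mset (seg (W S) j)) + mset (seg ((B S)(1 := v)) 0)"
      "length xs = 2^k"
      using merge_main[of 0 k n "W S" "(B S)(1 := v)"] trailed Suc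
      by (auto simp: k_trailed_def)
    have W': "W S' = fst (merge_rec n 0 (W S) ((B S)(1 := v)))"
      unfolding S'_def insert_bwa_def using tot b0 by (auto split: prod.splits)
    have "seg ((B S)(1 := v)) 0 = [v]" by (simp add: seg_def numeral_2_eq_2)
    then show ?thesis using W' xs seg_write_same[OF xs(3)] by (simp add: atLeast0LessThan)
  qed
  have P2: "\<forall>i<k. \<not> active S' i" using TS ts by (simp add: active_def)
  have P3: "strongly_k_trailed k n \<longrightarrow> stored S' = mset (seg (W S') k)"
  proof
    assume st: "strongly_k_trailed k n"
    have bits: "bit (n+1) i \<longleftrightarrow> i = k" for i
      using TS st unfolding strongly_k_trailed_def
      by (metis linorder_neqE_nat)
    have "k < n + 1" using bit_nat_rank_less TS by blast
    then have "{i. i < total S' \<and> active S' i} = {k}" using ts bits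
      by (auto simp: active_def)
    then show "stored S' = mset (seg (W S') k)" by (simp add: stored_def)
  qed
  show ?thesis using P1 P2 P3 by blast
qed

end
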